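(* $\mathrm{Sen}(\tilde{\mathcal N})\lesssim\mathrm{Sen}(\mathcal N)$: for every $n\ge1$ and every $P\in(0,1/2)$ there is a probability measure $\mu_P$ on $[0,\infty)$ such that, entrywise, $\mathrm{Sen}(\tilde{\mathcal N})_P\le\int\mathrm{Sen}(\mathcal N)_T\,d\mu_P(T)$.
   Context: Let $\mathbb{I}^n=\{0,1\}^n$ with Hamming distance $d$; operators on $\mathbb{R}^{\mathbb{I}^n}$ are identified with $2^n\times2^n$ matrices, and $A\le B$ means $B-A$ has nonnegative entries. For $0\le k\le n$, $(S_kf)(x)=\binom nk^{-1}\sum_{y:\,d(x,y)=k}f(y)$. For $p\in[0,1/2]$, $\tilde N_p=\sum_{k=0}^n\binom nkp^k(1-p)^{n-k}S_k$, and for $t\ge0$, $N_t=\tilde N_{(1-e^{-t})/2}$. Senate operators: $\mathrm{Sen}(\mathcal N)_T=\frac1T\int_0^TN_t\,dt$ for $T>0$ (and $\mathrm{Sen}(\mathcal N)_0=N_0=$ identity), and $\mathrm{Sen}(\tilde{\mathcal N})_P=\frac1P\int_0^P\tilde N_p\,dp$ for $P\in(0,1/2)$. For families $\mathcal A,\mathcal B$ of nonnegative matrices, $\mathcal A\lesssim\mathcal B$ means that for every $A\in\mathcal A$ there is a probability measure $\mu_A$ on $\mathcal B$ with $A\le\int B\,d\mu_A(B)$. *)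

theory Defs
  imports "HOL-Probability.Probability"
begin

text \<open>The cube I^n is represented as the subsets of {..<n} (x corresponds to its indicator
 vector); the Hamming distance is the cardinality of the symmetric difference.
 Operators are functions of two cube points (matrix entries).\<close>

definition cube :: "nat \<Rightarrow> nat set set" where
  "cube n = Pow {..<n}"

definition hamming :: "nat set \<Rightarrow> nat set \<Rightarrow> nat" where
  "hamming x y = card ((x - y) \<union> (y - x))"

text \<open>Matrix entries of S_k: (S_k f)(x) = binom(n,k)^{-1} * sum over y with d(x,y)=k of f(y).\<close>
definition S_op :: "nat \<Rightarrow> nat \<Rightarrow> nat set \<Rightarrow> nat set \<Rightarrow> real" where
  "S_op n k x y = (if hamming x y = k then 1 / real (n choose k) else 0)"

definition Ntil :: "nat \<Rightarrow> real \<Rightarrow> nat set \<Rightarrow> nat set \<Rightarrow> real" where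
  "Ntil n p x y = (\<Sum>k\<le>n. real (n choose k) * p ^ k * (1 - p) ^ (n - k) * S_op n k x y)"

definition Nt :: "nat \<Rightarrow> real \<Rightarrow> nat set \<Rightarrow> nat set \<Rightarrow> real" where
  "Nt n t = Ntil n ((1 - exp (- t)) / 2)"

definition SenN :: "nat \<Rightarrow> real \<Rightarrow> nat set \<Rightarrow> nat set \<Rightarrow> real" where
  "SenN n T x y = (if T = 0 then (if x = y then 1 else 0)
                   else (1 / T) * integral {0..T} (\<lambda>t. Nt n t x y))"

definition SenNtil :: "nat \<Rightarrow> real \<Rightarrow> nat set \<Rightarrow> nat set \<Rightarrow> real" where
  "SenNtil n P x y = (1 / P) * integral {0..P} (\<lambda>p. Ntil n p x y)"

end

theory Submission
  imports Defs
begin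


lemma F_deriv:
  fixes h :: "real \<Rightarrow> real"
  assumes "continuous_on UNIV h" "x \<in> {0..b}"
  shows "((\<lambda>T. integral {0..T} h) has_real_derivative h x) (at x within {0..b})"
  using integral_has_vector_derivative[of 0 b h x] assms continuous_on_subset
  by (auto simp add: has_real_derivative_iff_has_vector_derivative)

lemma F_cont:
  fixes h :: "real \<Rightarrow> real"
  assumes "continuous_on UNIV h"
  shows "continuous_on {0..b} (\<lambda>T. integral {0..T} h)"
proof (rule DERIV_continuous_on)
  fix x assume "x \<in> {0..b}"
  then show "((\<lambda>T. integral {0..T} h) has_real_derivative h x) (at x within {0..b})"
    using F_deriv[OF assms] by blast
qed

lemma F_deriv_at:
  fixes h :: "real \<Rightarrow> real"
  assumes "continuous_on UNIV h" "0 < x"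
  shows "((\<lambda>T. integral {0..T} h) has_real_derivative h x) (at x)"
proof -
  have "interior {0..x+1} = {0<..<x+1}" by (rule interior_atLeastAtMost_real)
  then have "x \<in> interior {0..x+1}" using assms by simp
  then have eq: "at x within {0..x+1} = at x" by (rule at_within_interior)
  have "x \<in> {0..x+1}" using assms by simp
  then have d: "((\<lambda>T. integral {0..T} h) has_real_derivative h x) (at x within {0..x+1})"
    by (rule F_deriv[OF assms(1)])
  show ?thesis using d unfolding eq .
qed

lemma H_meas:
  fixes h :: "real \<Rightarrow> real"
  assumes "continuous_on UNIV h"
  shows "(\<lambda>T. if T = 0 then c else (1/T) * integral {0..T} h) \<in> borel_measurable borel"
proof -
  have cont: "continuous_on {0<..} (\<lambda>T. (1/T) * integral {0..T} h)"
  proof (intro continuous_at_imp_continuous_on ballI)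
    fix x :: real assume "x \<in> {0<..}"
    then have x0: "0 < x" by simp
    have "isCont (\<lambda>T. integral {0..T} h) x"
      by (rule DERIV_isCont[OF F_deriv_at[OF assms x0]])
    then show "isCont (\<lambda>T. (1/T) * integral {0..T} h) x" using x0
      by (intro continuous_intros) auto
  qed
  have eq: "(\<lambda>T. if T = 0 then c else (1/T) * integral {0..T} h) =
     (\<lambda>T. indicator {0<..} T *\<^sub>R ((1/T) * integral {0..T} h) + indicator {0} T * c)"
  proof
    fix T :: real
    show "(if T = 0 then c else (1/T) * integral {0..T} h) =
       indicator {0<..} T *\<^sub>R ((1/T) * integral {0..T} h) + indicator {0} T * c"
    proof (cases "T < 0")
      case True
      then have "{0..T} = {}" by simp
      then show ?thesis using True by (simp add: indicator_def)
    next
      case False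
      then show ?thesis by (cases "T = 0") (simp_all add: indicator_def)
    qed
  qed
  have m1: "(\<lambda>T. indicator {0<..} T *\<^sub>R ((1/T) * integral {0..T} h)) \<in> borel_measurable borel"
    by (rule borel_measurable_continuous_on_indicator[OF _ cont]) simp
  have m2: "(\<lambda>T::real. indicator {0} T * c) \<in> borel_measurable borel"
    by simp
  show ?thesis unfolding eq using m1 m2 by (rule borel_measurable_add)
qed



lemma qb_aux: "0 < (x::real) \<Longrightarrow> x \<le> 1 \<Longrightarrow> 0 \<le> (1 - x) / 2 \<and> (1 - x) / 2 \<le> 1"
  by (simp add: field_simps)

lemma qb: "0 \<le> (t::real) \<Longrightarrow> 0 \<le> (1 - exp (- t)) / 2 \<and> (1 - exp (- t)) / 2 \<le> 1"
  by (rule qb_aux) simp_all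

lemma K_ident:
  fixes g :: "real \<Rightarrow> real"
  assumes cg: "continuous_on UNIV g" and a: "0 \<le> a"
  shows "integral {0..a} (\<lambda>s. integral {0..s} (\<lambda>t. g ((1-exp(-t))/2)) * exp(-s))
     + integral {0..a} (\<lambda>t. g((1-exp(-t))/2)) * exp(-a) = 2 * integral {0..(1-exp(-a))/2} g"
proof -
  define q :: "real \<Rightarrow> real" where "q t = (1-exp(-t))/2" for t
  define h where "h t = g (q t)" for t
  define F where "F T = integral {0..T} h" for T
  define G where "G u = integral {0..u} g" for u
  define K where "K T = integral {0..T} (\<lambda>s. F s * exp(-s)) + F T * exp(-T) - 2 * G (q T)" for T
  have cq: "continuous_on UNIV q" unfolding q_def by (intro continuous_intros) simp
  have ch: "continuous_on UNIV h" unfolding h_def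
    using continuous_on_compose2[OF cg cq subset_UNIV] .
  have qrange: "q ` {0..a} \<subseteq> {0..1}" unfolding q_def using qb by auto
  have dq: "(q has_real_derivative exp(-x)/2) (at x within {0..a})" for x
    unfolding q_def by (auto intro!: derivative_eq_intros)
  have "\<exists>c. \<forall>x\<in>{0..a}. K x = c"
  proof (rule has_field_derivative_zero_constant)
    fix x assume x: "x \<in> {0..a}"
    have c1: "continuous_on {0..a} (\<lambda>s. F s * exp(-s))" unfolding F_def
      by (intro continuous_intros F_cont[OF ch])
    have d1: "((\<lambda>T. integral {0..T} (\<lambda>s. F s * exp(-s))) has_real_derivative F x * exp(-x)) (at x within {0..a})"
      using integral_has_vector_derivative[OF c1 x] by (simp add: has_real_derivative_iff_has_vector_derivative)
    have d2: "(F has_real_derivative h x) (at x within {0..a})" unfolding F_def using F_deriv[OF ch x] .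
    have d3: "(G has_real_derivative g (q x)) (at (q x) within q ` {0..a})"
      unfolding G_def
      by (rule has_field_derivative_subset[OF F_deriv[OF cg] qrange]) (use qrange x in blast)
    have d4: "(G \<circ> q has_real_derivative g (q x) * (exp(-x)/2)) (at x within {0..a})"
      by (rule DERIV_image_chain[OF d3 dq])
    have "(K has_real_derivative (F x * exp(-x) + (h x * exp(-x) + F x * (- exp(-x))) - 2 * (g (q x) * (exp(-x)/2)))) (at x within {0..a})"
      unfolding K_def using d4
      by (auto intro!: derivative_eq_intros d1 d2 simp: comp_def)
    then show "(K has_real_derivative 0) (at x within {0..a})"
      by (simp add: h_def algebra_simps)
  qed (rule convex_real_interval)
  then obtain c where "\<forall>x\<in>{0..a}. K x = c" by blast
  then have "K a = K 0" using a by auto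
  also have "K 0 = 0" unfolding K_def F_def G_def q_def by simp
  finally show ?thesis unfolding K_def F_def G_def h_def q_def by simp
qed



lemma main_int:
  fixes g :: "real \<Rightarrow> real" and c P :: real
  assumes cg: "continuous_on UNIV g" and P: "0 < P" "P < 1/2"
  defines "a \<equiv> - ln (1 - 2*P)"
  defines "\<rho> \<equiv> \<lambda>s. indicator {0..a+1} s * (min s a * exp (- min s a) / (2*P))"
  defines "G \<equiv> \<lambda>s::real. max 0 (min s a)"
  defines "H \<equiv> \<lambda>T. if T = 0 then c else (1/T) * integral {0..T} (\<lambda>t. g ((1 - exp (-t))/2))"
  shows "integrable lborel (\<lambda>s. \<rho> s * H (G s)) \<and>
         integral\<^sup>L lborel (\<lambda>s. \<rho> s * H (G s)) = (1/P) * integral {0..P} g"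
proof -
  define q :: "real \<Rightarrow> real" where "q t = (1-exp(-t))/2" for t
  define h where "h t = g (q t)" for t
  define F where "F T = integral {0..T} h" for T
  define \<phi> where "\<phi> s = (1/(2*P)) * (F (min s a) * exp (- min s a))" for s
  have cq: "continuous_on UNIV q" unfolding q_def by (intro continuous_intros) simp
  have ch: "continuous_on UNIV h" unfolding h_def
    using continuous_on_compose2[OF cg cq subset_UNIV] .
  have l: "0 < 1 - 2*P" "1 - 2*P < 1" using P by auto
  have a0: "0 < a" unfolding a_def using l by simp
  have ea: "exp (- a) = 1 - 2*P" unfolding a_def using l by simp
  have qa: "q a = P" unfolding q_def ea by simp
  have eq: "\<rho> s * H (G s) = indicator {0..a+1} s *\<^sub>R \<phi> s" for s
  proof (cases "s \<in> {0..a+1}")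
    case False then show ?thesis unfolding \<rho>_def by simp
  next
    case True
    then have Gs: "G s = min s a" unfolding G_def using a0 by auto
    show ?thesis
    proof (cases "min s a = 0")
      case True
      then show ?thesis unfolding \<rho>_def \<phi>_def F_def by simp
    next
      case False
      then have "min s a > 0" using \<open>s \<in> {0..a+1}\<close> a0 by auto
      then show ?thesis using \<open>s \<in> {0..a+1}\<close> False unfolding \<rho>_def \<phi>_def H_def F_def h_def q_def Gs
        by (simp add: field_simps)
    qed
  qed
  have cF: "continuous_on {0..a} F" unfolding F_def by (rule F_cont[OF ch])
  have cmin: "continuous_on {0..a+1} (\<lambda>s. min s a)" by (intro continuous_intros)
  have minr: "(\<lambda>s. min s a) ` {0..a+1} \<subseteq> {0..a}" using a0 by auto
  have cFm: "continuous_on {0..a+1} (\<lambda>s. F (min s a))"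
    using continuous_on_compose2[OF cF cmin minr] .
  have cphi: "continuous_on {0..a+1} \<phi>" unfolding \<phi>_def
    by (intro continuous_intros cFm)
  have int: "integrable lborel (\<lambda>s. indicator {0..a+1} s *\<^sub>R \<phi> s)"
    by (rule borel_integrable_compact[OF compact_Icc cphi])
  have seti: "set_integrable lborel {0..a+1} \<phi>" using int unfolding set_integrable_def .
  have I1: "integral\<^sup>L lborel (\<lambda>s. indicator {0..a+1} s *\<^sub>R \<phi> s) = integral {0..a+1} \<phi>"
    using set_borel_integral_eq_integral(2)[OF seti] unfolding set_lebesgue_integral_def .
  have I2: "integral {0..a+1} \<phi> = integral {0..a} \<phi> + integral {a..a+1} \<phi>"
    by (rule Henstock_Kurzweil_Integration.integral_combine[symmetric]) (use a0 integrable_continuous_interval[OF cphi] in auto)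
  have I3: "integral {0..a} \<phi> = (1/(2*P)) * integral {0..a} (\<lambda>s. F s * exp (- s))"
  proof -
    have "integral {0..a} \<phi> = integral {0..a} (\<lambda>s. (1/(2*P)) *\<^sub>R (F s * exp (- s)))"
      by (rule integral_cong) (simp add: \<phi>_def)
    then show ?thesis by simp
  qed
  have I4: "integral {a..a+1} \<phi> = (1/(2*P)) * (F a * exp (- a))"
  proof -
    have "integral {a..a+1} \<phi> = integral {a..a+1} (\<lambda>s. (1/(2*P)) * (F a * exp (- a)))"
      by (rule integral_cong) (simp add: \<phi>_def)
    then show ?thesis by simp
  qed
  have K: "integral {0..a} (\<lambda>s. F s * exp (- s)) + F a * exp (- a) = 2 * integral {0..P} g"
    using K_ident[OF cg, of a] a0 qa unfolding F_def h_def q_def by simp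
  have fin: "integral\<^sup>L lborel (\<lambda>s. \<rho> s * H (G s)) = (1/P) * integral {0..P} g"
  proof -
    have "integral\<^sup>L lborel (\<lambda>s. \<rho> s * H (G s)) = integral\<^sup>L lborel (\<lambda>s. indicator {0..a+1} s *\<^sub>R \<phi> s)"
      using eq by simp
    also have "\<dots> = (1/(2*P)) * (integral {0..a} (\<lambda>s. F s * exp (- s)) + F a * exp (- a))"
      unfolding I1 I2 I3 I4 by (simp add: algebra_simps)
    also have "\<dots> = (1/P) * integral {0..P} g" unfolding K using P by simp
    finally show ?thesis .
  qed
  show ?thesis using fin int eq by simp
qed



theorem lemma4:
  fixes n :: nat and P :: real
  assumes "n \<ge> 1" and "0 < P" and "P < 1/2"
  shows "\<exists>\<mu> :: real measure. prob_space \<mu> \<and> sets \<mu> = sets borel \<and>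
           (AE T in \<mu>. T \<ge> 0) \<and>
           (\<forall>x\<in>cube n. \<forall>y\<in>cube n.
              integrable \<mu> (\<lambda>T. SenN n T x y) \<and>
              SenNtil n P x y \<le> (\<integral>T. SenN n T x y \<partial>\<mu>))"
proof -
  define a where "a = - ln (1 - 2*P)"
  define \<rho> where "\<rho> = (\<lambda>s. indicator {0..a+1} s * (min s a * exp (- min s a) / (2*P)))"
  define G where "G = (\<lambda>s::real. max 0 (min s a))"
  define \<mu> where "\<mu> = distr (density lborel (\<lambda>s. ennreal (\<rho> s))) borel G"
  have P: "0 < P" "P < 1/2" using assms by auto
  have l: "0 < 1 - 2*P" using P by auto
  have a0: "0 < a" unfolding a_def using l P by simp
  have \<rho>m[measurable]: "\<rho> \<in> borel_measurable borel" unfolding \<rho>_def by measurable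
  have \<rho>0: "0 \<le> \<rho> s" for s unfolding \<rho>_def using a0 P by (auto simp: indicator_def)
  have Gm[measurable]: "G \<in> borel_measurable borel" unfolding G_def by measurable
  have G0: "0 \<le> G s" for s unfolding G_def by simp
  have sets: "sets \<mu> = sets borel" unfolding \<mu>_def by simp
  have key: "integrable \<mu> H \<and> integral\<^sup>L \<mu> H = (1/P) * integral {0..P} g"
    if cg: "continuous_on UNIV g" and Hd: "H = (\<lambda>T. if T = 0 then c else (1/T) * integral {0..T} (\<lambda>t. g ((1 - exp (-t))/2)))"
    for g H and c :: real
  proof -
    have Hm[measurable]: "H \<in> borel_measurable borel" unfolding Hd by (rule H_meas[OF continuous_on_compose2[OF cg _ subset_UNIV]]) (intro continuous_intros, simp)
    have M: "integrable lborel (\<lambda>s. \<rho> s * H (G s)) \<and>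
         integral\<^sup>L lborel (\<lambda>s. \<rho> s * H (G s)) = (1/P) * integral {0..P} g"
      unfolding Hd \<rho>_def G_def a_def by (rule main_int[OF cg P])
    have "integrable \<mu> H \<longleftrightarrow> integrable (density lborel (\<lambda>s. ennreal (\<rho> s))) (\<lambda>s. H (G s))"
      unfolding \<mu>_def by (rule integrable_distr_eq) measurable
    also have "\<dots> \<longleftrightarrow> integrable lborel (\<lambda>s. \<rho> s *\<^sub>R H (G s))"
      by (rule integrable_density) (auto simp: \<rho>0)
    finally have i: "integrable \<mu> H" using M by simp
    have "integral\<^sup>L \<mu> H = integral\<^sup>L (density lborel (\<lambda>s. ennreal (\<rho> s))) (\<lambda>s. H (G s))"
      unfolding \<mu>_def by (rule integral_distr) measurable
    also have "\<dots> = integral\<^sup>L lborel (\<lambda>s. \<rho> s *\<^sub>R H (G s))"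
      by (rule integral_density) (auto simp: \<rho>0)
    finally show ?thesis using M i by simp
  qed
  have prob: "prob_space \<mu>"
  proof (rule prob_spaceI)
    define H1 where "H1 = (\<lambda>T::real. if T = 0 then 1 else (1/T) * integral {0..T} (\<lambda>t. (\<lambda>_. 1::real) ((1 - exp (-t))/2)))"
    have M1: "integrable lborel (\<lambda>s. \<rho> s * H1 (G s)) \<and>
         integral\<^sup>L lborel (\<lambda>s. \<rho> s * H1 (G s)) = (1/P) * integral {0..P} (\<lambda>_. 1::real)"
      unfolding H1_def \<rho>_def G_def a_def by (rule main_int[OF _ P]) simp
    have H1G: "H1 (G s) = 1" for s
      using G0[of s] by (auto simp: H1_def)
    have ir: "integrable lborel \<rho>" using M1 unfolding H1G by simp
    have vr: "integral\<^sup>L lborel \<rho> = 1" using M1 P unfolding H1G by simp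
    have "emeasure \<mu> (space \<mu>) = emeasure (density lborel (\<lambda>s. ennreal (\<rho> s))) (G -` UNIV \<inter> space (density lborel (\<lambda>s. ennreal (\<rho> s))))"
      unfolding \<mu>_def by (subst emeasure_distr) auto
    also have "\<dots> = emeasure (density lborel (\<lambda>s. ennreal (\<rho> s))) UNIV" by simp
    also have "\<dots> = (\<integral>\<^sup>+ s. ennreal (\<rho> s) \<partial>lborel)"
      by (subst emeasure_density) auto
    also have "\<dots> = ennreal (integral\<^sup>L lborel \<rho>)"
      by (rule nn_integral_eq_integral[OF ir]) (simp add: \<rho>0)
    finally show "emeasure \<mu> (space \<mu>) = 1" using vr by simp
  qed
  have ae: "AE T in \<mu>. T \<ge> 0"
    unfolding \<mu>_def by (subst AE_distr_iff) (auto simp: G0)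
  have ent: "integrable \<mu> (\<lambda>T. SenN n T x y) \<and> SenNtil n P x y \<le> (\<integral>T. SenN n T x y \<partial>\<mu>)" for x y
  proof -
    have cg: "continuous_on UNIV (\<lambda>p. Ntil n p x y)"
      unfolding Ntil_def by (intro continuous_intros)
    have Hd: "(\<lambda>T. SenN n T x y) = (\<lambda>T. if T = 0 then (if x = y then 1 else 0) else (1/T) * integral {0..T} (\<lambda>t. Ntil n ((1 - exp (-t))/2) x y))"
      by (rule ext) (simp add: SenN_def Nt_def)
    have k: "integrable \<mu> (\<lambda>T. SenN n T x y) \<and> integral\<^sup>L \<mu> (\<lambda>T. SenN n T x y) = (1/P) * integral {0..P} (\<lambda>p. Ntil n p x y)"
      by (rule key[OF cg Hd])
    then show ?thesis by (simp add: SenNtil_def)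
  qed
  show ?thesis
    by (intro exI[of _ \<mu>] conjI prob sets ae ballI ent[THEN conjunct1] ent[THEN conjunct2])
qed

end
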